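(* Assume Assumptions (LS) and (LT) below hold, and let $\rho$ and $G$ be the constants of Assumption (LS). There exist $C>0$, $\delta>0$ and $r_0$ such that for all $r>r_0$ and $|z|\le\rho r$, $$\mathbb{P}\left(X_r^z<\mu r-\frac{Gz^2}{r}-Cr^{1/3}\right)\ge\delta.$$
   Context: Let $\{\xi_v:v\in\mathbb{Z}^2\}$ be i.i.d. random variables with a common law $\nu$ supported on $[0,\infty)$. A directed path is an up-right nearest-neighbour path in $\mathbb{Z}^2$, and its weight is $\ell(\gamma)=\sum_{u\in\gamma}\xi_u$. For $u\preceq v$ coordinatewise, $X_{u,v}=\max_{\gamma:u\to v}\ell(\gamma)$ over directed paths from $u$ to $v$ ($-\infty$ if none). For $r\in\mathbb{N}$, $z\in\mathbb{Z}$, $X_r^z=X_{(1,1),(r-z,r+z)}$ and $X_r=X_r^0$. It is assumed that $\mu=\lim_{r\to\infty}r^{-1}\mathbb{E}[X_r]<\infty$. Assumption (LS): there exist positive finite constants $\rho,G,H,g_1,g_2$ such that for all large enough $r$ and all $z\in[-\rho r,\rho r]$, $\mathbb{E}[X_r^z]\in \mu r-G\frac{z^2}{r}+\left[-H\frac{z^4}{r^3},0\right]+\left[-g_1r^{1/3},-g_2r^{1/3}\right]$. Assumption (LT): there exists $\alpha>0$ such that for every $\varepsilon>0$ there exist positive finite $c,\theta_0,r_0$ (depending only on $\varepsilon$) such that for all $r>r_0$, $\theta>\theta_0$ and $|z|\le(1-\varepsilon)r$, $\mathbb{P}(X_r^z-\mathbb{E}[X_r^z]<-\theta r^{1/3})\le\exp(-c\theta^\alpha)$.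 *)

theory Defs
  imports "HOL-Probability.Probability"
begin

definition dpath :: "(int \<times> int) list \<Rightarrow> bool" where
  "dpath \<gamma> \<longleftrightarrow> \<gamma> \<noteq> [] \<and>
     (\<forall>i. Suc i < length \<gamma> \<longrightarrow>
        (\<gamma> ! Suc i = (fst (\<gamma> ! i) + 1, snd (\<gamma> ! i)) \<or>
         \<gamma> ! Suc i = (fst (\<gamma> ! i), snd (\<gamma> ! i) + 1)))"

definition dpaths :: "int \<times> int \<Rightarrow> int \<times> int \<Rightarrow> (int \<times> int) list set" where
  "dpaths u v = {\<gamma>. dpath \<gamma> \<and> hd \<gamma> = u \<and> last \<gamma> = v}"

definition pweight :: "(int \<times> int \<Rightarrow> 'a \<Rightarrow> real) \<Rightarrow> (int \<times> int) list \<Rightarrow> 'a \<Rightarrow> real" where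
  "pweight \<xi> \<gamma> \<omega> = sum_list (map (\<lambda>p. \<xi> p \<omega>) \<gamma>)"

(* last passage value X_{u,v}; only meaningful when dpaths u v is nonempty
   (the paper's value -infinity for the empty case is never used below) *)
definition LPP :: "(int \<times> int \<Rightarrow> 'a \<Rightarrow> real) \<Rightarrow> int \<times> int \<Rightarrow> int \<times> int \<Rightarrow> 'a \<Rightarrow> real" where
  "LPP \<xi> u v \<omega> = Max ((\<lambda>\<gamma>. pweight \<xi> \<gamma> \<omega>) ` dpaths u v)"

definition Xrz :: "(int \<times> int \<Rightarrow> 'a \<Rightarrow> real) \<Rightarrow> nat \<Rightarrow> int \<Rightarrow> 'a \<Rightarrow> real" where
  "Xrz \<xi> r z = LPP \<xi> (1, 1) (int r - z, int r + z)"

(* Assumption (LS) with constants rho, G, H, g1, g2.  The expectation being a real number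
   entails that X_r^z is finite (i.e. a directed path exists, |z| < r) and integrable;
   this is made explicit. *)
definition AssumptionLS ::
  "'a measure \<Rightarrow> (int \<times> int \<Rightarrow> 'a \<Rightarrow> real) \<Rightarrow> real \<Rightarrow> real \<Rightarrow> real \<Rightarrow> real \<Rightarrow> real \<Rightarrow> real \<Rightarrow> bool" where
  "AssumptionLS M \<xi> \<mu> \<rho> G H g1 g2 \<longleftrightarrow>
     (\<exists>R. \<forall>r::nat. real r \<ge> R \<longrightarrow> (\<forall>z::int. real_of_int \<bar>z\<bar> \<le> \<rho> * real r \<longrightarrow>
        \<bar>z\<bar> < int r \<and> integrable M (Xrz \<xi> r z) \<and>
        (\<exists>a b. a \<in> {- H * real_of_int z ^ 4 / real r ^ 3 .. 0} \<and>
               b \<in> {- g1 * real r powr (1/3) .. - g2 * real r powr (1/3)} \<and>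
               (\<integral>\<omega>. Xrz \<xi> r z \<omega> \<partial>M) = \<mu> * real r - G * real_of_int z ^ 2 / real r + a + b)))"

definition AssumptionLT :: "'a measure \<Rightarrow> (int \<times> int \<Rightarrow> 'a \<Rightarrow> real) \<Rightarrow> bool" where
  "AssumptionLT M \<xi> \<longleftrightarrow>
     (\<exists>\<alpha>>0. \<forall>\<epsilon>>0. \<exists>c>0. \<exists>\<theta>0>0. \<exists>r0>0.
        \<forall>r::nat. real r > r0 \<longrightarrow> (\<forall>\<theta>. \<theta> > \<theta>0 \<longrightarrow> (\<forall>z::int. real_of_int \<bar>z\<bar> \<le> (1 - \<epsilon>) * real r \<longrightarrow>
          measure M {\<omega> \<in> space M. Xrz \<xi> r z \<omega> - (\<integral>\<omega>'. Xrz \<xi> r z \<omega>' \<partial>M)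
                                      < - \<theta> * real r powr (1/3)}
            \<le> exp (- c * \<theta> powr \<alpha>))))"

end

theory Submission
  imports Defs "HOL-Real_Asymp.Real_Asymp"
begin

lemma tail_pointwise:
  fixes y s :: real and K :: nat
  assumes s: "s > 0" and AA: "\<And>i. y < - real (i + K) * s \<Longrightarrow> w \<in> A i"
  shows "ennreal (max 0 (- y - real K * s)) \<le> (\<Sum>i. ennreal s * indicator (A i) w)"
  proof (cases "- y - real K * s \<le> 0")
    case True then show ?thesis by simp
  next
    case False
    define u where "u = (- y - real K * s) / s"
    have u: "u > 0" using False s by (simp add: u_def field_simps)
    define n where "n = nat \<lceil>u\<rceil>"
    have iu: "real i < u" if "i < n" for i using that u unfolding n_def by linarith
    have "w \<in> A i" if "i < n" for i
    proof -
      have "real i * s < u * s" using iu[OF that] s by simp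
      also have "u * s = - y - real K * s" using s by (simp add: u_def)
      finally show ?thesis by (intro AA) (simp add: algebra_simps)
    qed
    hence "(\<Sum>i<n. ennreal s * indicator (A i) w) = (\<Sum>i<n. ennreal s)" by simp
    also have "\<dots> = ennreal (s * real n)" using s by (simp add: ennreal_of_nat_eq_real_of_nat ennreal_mult mult.commute)
    finally have eq: "(\<Sum>i<n. ennreal s * indicator (A i) w) = ennreal (s * real n)" .
    have "max 0 (- y - real K * s) = u * s" using False s by (simp add: u_def)
    also have "\<dots> \<le> s * real n" using s unfolding n_def by (simp add: mult.commute) linarith
    finally have "ennreal (max 0 (- y - real K * s)) \<le> (\<Sum>i<n. ennreal s * indicator (A i) w)"
      unfolding eq by (rule ennreal_leI)
    also have "\<dots> \<le> (\<Sum>i. ennreal s * indicator (A i) w)"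
      by (rule sum_le_suminf) auto
    finally show ?thesis .
  qed

lemma core:
  fixes Y :: "'a \<Rightarrow> real" and e :: "nat \<Rightarrow> real"
  assumes P: "prob_space M" and I: "integrable M Y" and E0: "(\<integral>\<omega>. Y \<omega> \<partial>M) = 0"
    and s: "s > 0" and a: "a > 0" and d: "0 < \<delta>" "\<delta> < 1/2" "real K * \<delta> \<le> a/4"
    and sm: "summable (\<lambda>i. e (i + K))" and tl: "(\<Sum>i. e (i + K)) \<le> a/4"
    and bd: "\<And>i. measure M {\<omega>\<in>space M. Y \<omega> < - real (i + K) * s} \<le> e (i + K)"
  shows "measure M {\<omega>\<in>space M. Y \<omega> < a * s} \<ge> \<delta>"
proof (rule ccontr)
  interpret prob_space M by (rule P)
  assume "\<not> ?thesis"
  hence PB: "prob {\<omega>\<in>space M. Y \<omega> < a * s} < \<delta>" by simp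
  define B where "B = {\<omega>\<in>space M. Y \<omega> < a * s}"
  define T where "T = (\<lambda>\<omega>. max 0 (- Y \<omega> - real K * s))"
  define A where "A = (\<lambda>i. {\<omega>\<in>space M. Y \<omega> < - real (i + K) * s})"
  have Ym: "Y \<in> borel_measurable M" using I by auto
  have Bm: "B \<in> sets M" unfolding B_def using Ym by measurable
  have Am: "A i \<in> sets M" for i unfolding A_def using Ym by measurable
  have TI: "integrable M T" unfolding T_def
    using I by (auto intro!: integrable_max integrable_diff integrable_minus)
  have Tm: "T \<in> borel_measurable M" using TI by auto
  have pw: "Y \<omega> \<ge> a * s * indicator (space M - B) \<omega> - real K * s * indicator B \<omega> - T \<omega>"
    if "\<omega> \<in> space M" for \<omega>
    using that a s by (auto simp: B_def T_def indicator_def)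
  have IB1: "integrable M (indicat_real B)" using Bm by (intro integrable_real_indicator) (auto simp: emeasure_eq_measure)
  have IB2: "integrable M (indicat_real (space M - B))" using Bm by (intro integrable_real_indicator) (auto simp: emeasure_eq_measure)
  have LI: "integrable M (\<lambda>\<omega>. a * s * indicator (space M - B) \<omega> - real K * s * indicator B \<omega> - T \<omega>)"
    using IB1 IB2 TI by simp
  have "(\<integral>\<omega>. a * s * indicator (space M - B) \<omega> - real K * s * indicator B \<omega> - T \<omega> \<partial>M) \<le> (\<integral>\<omega>. Y \<omega> \<partial>M)"
    using pw LI I by (intro integral_mono) auto
  also have "\<dots> = 0" by (rule E0)
  finally have main: "a * s * prob (space M - B) - real K * s * prob B - (\<integral>\<omega>. T \<omega> \<partial>M) \<le> 0"
    using Bm TI IB1 IB2 by (simp add: integral_diff)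
  have e0: "0 \<le> e (i + K)" for i using bd[of i] measure_nonneg order_trans by blast
  have Teq: "(\<integral>\<omega>. T \<omega> \<partial>M) = enn2real (\<integral>\<^sup>+\<omega>. ennreal (T \<omega>) \<partial>M)"
    by (rule integral_eq_nn_integral[OF Tm]) (auto simp: T_def)
  have "(\<integral>\<^sup>+\<omega>. ennreal (T \<omega>) \<partial>M) \<le> (\<integral>\<^sup>+\<omega>. (\<Sum>i. ennreal s * indicator (A i) \<omega>) \<partial>M)"
    unfolding T_def
    by (intro nn_integral_mono tail_pointwise s) (auto simp: A_def)
  also have "\<dots> = (\<Sum>i. \<integral>\<^sup>+\<omega>. ennreal s * indicator (A i) \<omega> \<partial>M)"
    using Am by (intro nn_integral_suminf) auto
  also have "\<dots> = (\<Sum>i. ennreal s * emeasure M (A i))"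
    using Am by (simp add: nn_integral_cmult_indicator)
  also have "\<dots> \<le> (\<Sum>i. ennreal (s * e (i + K)))"
    using bd s by (intro suminf_le) (auto simp: emeasure_eq_measure ennreal_mult[symmetric] A_def intro!: ennreal_leI mult_left_mono)
  also have "\<dots> = ennreal (\<Sum>i. s * e (i + K))"
    using e0 s sm by (intro suminf_ennreal2) (auto intro: summable_mult)
  finally have "(\<integral>\<omega>. T \<omega> \<partial>M) \<le> (\<Sum>i. s * e (i + K))"
    unfolding Teq using e0 s sm by (intro enn2real_leI suminf_nonneg summable_mult) auto
  also have "\<dots> = s * (\<Sum>i. e (i + K))" using sm by (rule suminf_mult)
  also have "\<dots> \<le> s * (a/4)" using tl s by simp
  finally have Tb: "(\<integral>\<omega>. T \<omega> \<partial>M) \<le> s * (a/4)" .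
  have pc: "prob (space M - B) = 1 - prob B" using Bm by (simp add: prob_compl)
  have pB: "prob B < \<delta>" using PB B_def by simp
  have "real K * s * prob B \<le> real K * s * \<delta>" using pB s by (intro mult_left_mono) auto
  also have "\<dots> \<le> s * (a/4)" using d s by (simp add: mult.commute mult.left_commute mult_left_mono)
  finally have "a * s * (1 - prob B) \<le> s * (a/2)" using main Tb pc by simp
  hence "(a * (1 - prob B)) * s \<le> (a/2) * s" by (simp add: algebra_simps)
  hence "a * (1 - prob B) \<le> a/2" using s by (rule mult_right_le_imp_le)
  hence "1 - prob B \<le> 1/2" using a by (simp add: field_simps)
  thus False using pB d by simp
qed

lemma exp_summable:
  fixes c \<alpha> :: real assumes "c > 0" "\<alpha> > 0"
  shows "summable (\<lambda>k::nat. exp (- c * real k powr \<alpha>))"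
proof (rule summable_comparison_test_ev)
  have "((\<lambda>k::nat. exp (- c * real k powr \<alpha>) * real k ^ 2) \<longlongrightarrow> 0) at_top"
    using assms by real_asymp
  hence ev: "eventually (\<lambda>k. exp (- c * real k powr \<alpha>) * real k ^ 2 < 1) sequentially"
    by (rule order_tendstoD) simp
  show "eventually (\<lambda>k. norm (exp (- c * real k powr \<alpha>)) \<le> inverse (real k ^ 2)) sequentially"
    using ev eventually_gt_at_top[of "0::nat"]
  proof eventually_elim
    case (elim k)
    then show ?case by (simp add: field_simps)
  qed
  show "summable (\<lambda>k::nat. inverse (real k ^ 2))" by (rule inverse_power_summable) simp
qed

theorem lemma4p2:
  fixes M :: "'a measure" and \<xi> :: "int \<times> int \<Rightarrow> 'a \<Rightarrow> real" and \<nu> :: "real measure"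
    and \<mu> \<rho> G H g1 g2 :: real
  assumes P: "prob_space M"
    and rv: "\<And>v. \<xi> v \<in> borel_measurable M"
    and indep: "prob_space.indep_vars M (\<lambda>_. borel) \<xi> UNIV"
    and law: "\<And>v. distr M borel (\<xi> v) = \<nu>"
    and supp: "emeasure \<nu> {0..} = 1"
    and integ: "\<And>r. r \<ge> 1 \<Longrightarrow> integrable M (Xrz \<xi> r 0)"
    and mu: "(\<lambda>r::nat. (\<integral>\<omega>. Xrz \<xi> r 0 \<omega> \<partial>M) / real r) \<longlonglongrightarrow> \<mu>"
    and pos: "\<rho> > 0" "G > 0" "H > 0" "g1 > 0" "g2 > 0"
    and LS: "AssumptionLS M \<xi> \<mu> \<rho> G H g1 g2"
    and LT: "AssumptionLT M \<xi>"
  shows "\<exists>C>0. \<exists>\<delta>>0. \<exists>r0. \<forall>r::nat. real r > r0 \<longrightarrow>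
           (\<forall>z::int. real_of_int \<bar>z\<bar> \<le> \<rho> * real r \<longrightarrow>
              measure M {\<omega> \<in> space M. Xrz \<xi> r z \<omega>
                 < \<mu> * real r - G * real_of_int z ^ 2 / real r - C * real r powr (1/3)} \<ge> \<delta>)"
  proof -
  interpret prob_space M by (rule P)
  from LS obtain R where R: "\<And>r z. real r \<ge> R \<Longrightarrow> real_of_int \<bar>z\<bar> \<le> \<rho> * real r \<Longrightarrow>
        \<bar>z\<bar> < int r \<and> integrable M (Xrz \<xi> r z) \<and>
        (\<exists>a b. a \<in> {- H * real_of_int z ^ 4 / real r ^ 3 .. 0} \<and>
               b \<in> {- g1 * real r powr (1/3) .. - g2 * real r powr (1/3)} \<and>
               (\<integral>\<omega>. Xrz \<xi> r z \<omega> \<partial>M) = \<mu> * real r - G * real_of_int z ^ 2 / real r + a + b)"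
    unfolding AssumptionLS_def by blast
  have rho1: "\<rho> < 1"
  proof (rule ccontr)
    assume "\<not> \<rho> < 1"
    define r where "r = nat \<lceil>max R 1\<rceil>"
    have r1: "real r \<ge> R" "real r \<ge> 1" unfolding r_def by linarith+
    have "real_of_int \<bar>int r\<bar> \<le> \<rho> * real r" using \<open>\<not> \<rho> < 1\<close> r1 by simp
    from R[OF r1(1) this] show False by simp
  qed
  from LT obtain \<alpha> where \<alpha>: "\<alpha> > 0" and LT1: "\<And>\<epsilon>. \<epsilon> > 0 \<Longrightarrow> \<exists>c>0. \<exists>\<theta>0>0. \<exists>r0>0.
        \<forall>r::nat. real r > r0 \<longrightarrow> (\<forall>\<theta>. \<theta> > \<theta>0 \<longrightarrow> (\<forall>z::int. real_of_int \<bar>z\<bar> \<le> (1 - \<epsilon>) * real r \<longrightarrow>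
          measure M {\<omega> \<in> space M. Xrz \<xi> r z \<omega> - (\<integral>\<omega>'. Xrz \<xi> r z \<omega>' \<partial>M)
                                      < - \<theta> * real r powr (1/3)}
            \<le> exp (- c * \<theta> powr \<alpha>)))"
    unfolding AssumptionLT_def by blast
  from LT1[of "1 - \<rho>"] rho1 obtain c \<theta>0 r1 where c: "c > 0" and th0: "\<theta>0 > 0" and r1: "r1 > 0"
    and LT2: "\<And>r \<theta> z. real r > r1 \<Longrightarrow> \<theta> > \<theta>0 \<Longrightarrow> real_of_int \<bar>z\<bar> \<le> (1 - (1 - \<rho>)) * real r \<Longrightarrow>
          measure M {\<omega> \<in> space M. Xrz \<xi> r z \<omega> - (\<integral>\<omega>'. Xrz \<xi> r z \<omega>' \<partial>M)
                                      < - \<theta> * real r powr (1/3)}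
            \<le> exp (- c * \<theta> powr \<alpha>)"
    by auto
  define e where "e = (\<lambda>k::nat. exp (- c * real k powr \<alpha>))"
  have esum: "summable e" unfolding e_def by (rule exp_summable[OF c \<alpha>])
  define a where "a = g2 / 2"
  have a: "a > 0" using pos by (simp add: a_def)
  obtain N where N: "\<And>n. n \<ge> N \<Longrightarrow> norm (\<Sum>i. e (i + n)) < a/4"
    using suminf_exist_split[of "a/4" e] a esum by auto
  define K where "K = max N (nat \<lceil>\<theta>0\<rceil> + 1)"
  have K\<theta>: "real K > \<theta>0" unfolding K_def by linarith
  have smK: "summable (\<lambda>i. e (i + K))" using esum by (rule summable_ignore_initial_segment)
  have tlK: "(\<Sum>i. e (i + K)) \<le> a/4" using N[of K] unfolding K_def by simp
  define \<delta> where "\<delta> = min (1/4) (a / (4 * (real K + 1)))"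
  have d: "0 < \<delta>" "\<delta> < 1/2" using a unfolding \<delta>_def by auto
  have "real K * \<delta> \<le> real K * (a / (4 * (real K + 1)))" unfolding \<delta>_def by (intro mult_left_mono) auto
  also have "\<dots> \<le> a / 4" using a by (simp add: field_simps)
  finally have dK: "real K * \<delta> \<le> a/4" .
  have main: "measure M {\<omega> \<in> space M. Xrz \<xi> r z \<omega>
                 < \<mu> * real r - G * real_of_int z ^ 2 / real r - a * real r powr (1/3)} \<ge> \<delta>"
    if r: "real r > max (max R r1) 1" and z: "real_of_int \<bar>z\<bar> \<le> \<rho> * real r" for r :: nat and z :: int
  proof -
    have rR: "real r \<ge> R" using r by simp
    from R[OF rR z] obtain a' b where XI: "integrable M (Xrz \<xi> r z)"
      and a': "a' \<le> 0" and b: "b \<le> - g2 * real r powr (1/3)"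
      and EX: "(\<integral>\<omega>. Xrz \<xi> r z \<omega> \<partial>M) = \<mu> * real r - G * real_of_int z ^ 2 / real r + a' + b"
      by auto
    define s where "s = real r powr (1/3)"
    have s: "s > 0" using r unfolding s_def by simp
    define m where "m = (\<integral>\<omega>. Xrz \<xi> r z \<omega> \<partial>M)"
    define Y where "Y = (\<lambda>\<omega>. Xrz \<xi> r z \<omega> - m)"
    have YI: "integrable M Y" unfolding Y_def using XI by simp
    have Y0: "(\<integral>\<omega>. Y \<omega> \<partial>M) = 0" unfolding Y_def m_def using XI by (simp add: prob_space)
    have bd: "measure M {\<omega>\<in>space M. Y \<omega> < - real (i + K) * s} \<le> e (i + K)" for i
    proof -
      have "real (i + K) > \<theta>0" using K\<theta> by simp
      moreover have "real_of_int \<bar>z\<bar> \<le> (1 - (1 - \<rho>)) * real r" using z by simp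
      moreover have "real r > r1" using r by simp
      ultimately show ?thesis using LT2 unfolding Y_def m_def s_def e_def by blast
    qed
    have core: "measure M {\<omega>\<in>space M. Y \<omega> < a * s} \<ge> \<delta>"
      by (rule core[OF P YI Y0 s a d dK smK tlK bd])
    have Xm: "Xrz \<xi> r z \<in> borel_measurable M" using XI by auto
    have sub: "{\<omega>\<in>space M. Y \<omega> < a * s} \<subseteq> {\<omega> \<in> space M. Xrz \<xi> r z \<omega>
                 < \<mu> * real r - G * real_of_int z ^ 2 / real r - a * real r powr (1/3)}"
      using a' b unfolding Y_def m_def EX s_def a_def by auto
    have "measure M {\<omega>\<in>space M. Y \<omega> < a * s} \<le> measure M {\<omega> \<in> space M. Xrz \<xi> r z \<omega>
                 < \<mu> * real r - G * real_of_int z ^ 2 / real r - a * real r powr (1/3)}"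
      by (rule finite_measure_mono[OF sub]) (use Xm in measurable)
    with core show ?thesis by simp
  qed
  show ?thesis using main a d by blast
qed

end
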